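(* Every uniform Kan complex $A$ has a connection $c:A^{\mathrm{I}}\to A^{\mathrm{I}\times\mathrm{I}}$.
   Context: Let $\mathbb{B}$ be the category of finite sets $[n]=\{\bot,x_1,\dots,x_n,\top\}$ ($n\ge0$, $\bot\ne\top$) and functions preserving $\bot,\top$; cartesian cubical sets are presheaves on $\mathbb{B}^{op}$. $\mathrm{I}^n$ is the representable on $[n]$, $\mathrm{I}^n\cong\mathrm{I}\times\dots\times\mathrm{I}$, $\mathrm{I}=\mathrm{I}^1$, $\mathrm{I}^0=1$; maps $\mathrm{I}^n\to X$ correspond to $n$-cubes of $X$. The two maps $[1]\to[0]$ give endpoints $0,1:1\to\mathrm{I}$. For $1\le i\le n$, $d\in\{0,1\}$, the face $\alpha_i^d:\mathrm{I}^{n-1}\to\mathrm{I}^n$ inserts $d$ in coordinate $i$; for $e\in\{0,1\}$ the open box $\sqcup^n_e\rightarrowtail\mathrm{I}^n$ is the union of the images of all faces $\alpha_i^d$ with $(i,d)\ne(1,e)$, with inclusion $i^n_e$. A uniform Kan complex is a cubical set $A$ with, for each $n\ge1$, $e\in\{0,1\}$, $k\ge1$ and each $b:\mathrm{I}^k\times\sqcup^n_e\to A$, a chosen extension $\phi(b):\mathrm{I}^k\times\mathrm{I}^n\to A$ of $b$ along $1\times i^n_e$, such that $\phi(b(\alpha\times1))=\phi(b)(\alpha\times1)$ for all $\alpha:\mathrm{I}^j\to\mathrm{I}^k$ ($j\ge 1$). A connection on a cubical set $X$ is a map of cubical sets $c:X^{\mathrm{I}}\to X^{\mathrm{I}\times\mathrm{I}}$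 such that for every $n$ and every $n$-cube $a$ of $X^{\mathrm{I}}$, viewed as $a:\mathrm{I}^n\times\mathrm{I}\to X$, with $a_0=a\circ(1\times0):\mathrm{I}^n\to X$, the $n$-cube $c(a)$, viewed as $c(a):\mathrm{I}^n\times\mathrm{I}\times\mathrm{I}\to X$ (coordinates $(u,s,t)$), satisfies: its restriction to $s=1$ is $a$ (as a map $\mathrm{I}^n\times\mathrm{I}\to X$ in $(u,t)$), and its restrictions to $s=0$ and to $t=0$ are both the constant path $a_0\circ\mathrm{pr}_{\mathrm{I}^n}$ at $a_0$. (The restriction to $t=1$ is unconstrained.) *)

theory Defs
  imports Main
begin

text \<open>Elements of [n] = {bot, x_1, ..., x_n, top}: Bot, Top and V i for 1 \<le> i \<le> n.\<close>
datatype pt = Bot | Top | V nat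

definition pts :: "nat \<Rightarrow> pt set" where
  "pts m = {Bot, Top} \<union> V ` {1..m}"

text \<open>A morphism [n] \<rightarrow> [m] of \<B> (preserving bot and top) is encoded by its values on
  x_1..x_n; outside {1..n} the encoding is fixed to Bot (extensionality).\<close>
definition Bmaps :: "nat \<Rightarrow> nat \<Rightarrow> (nat \<Rightarrow> pt) set" where
  "Bmaps n m = {f. (\<forall>i\<in>{1..n}. f i \<in> pts m) \<and> (\<forall>i. i \<notin> {1..n} \<longrightarrow> f i = Bot)}"

fun ext :: "(nat \<Rightarrow> pt) \<Rightarrow> pt \<Rightarrow> pt" where
  "ext g Bot = Bot"
| "ext g Top = Top"
| "ext g (V j) = g j"

definition bcomp :: "(nat \<Rightarrow> pt) \<Rightarrow> (nat \<Rightarrow> pt) \<Rightarrow> (nat \<Rightarrow> pt)" where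
  "bcomp g f = ext g \<circ> f"

definition idB :: "nat \<Rightarrow> (nat \<Rightarrow> pt)" where
  "idB n = (\<lambda>i. if 1 \<le> i \<and> i \<le> n then V i else Bot)"

text \<open>f \<oplus> id_k : [n+k] \<rightarrow> [m+k] for f : [n] \<rightarrow> [m].\<close>
definition bsum :: "nat \<Rightarrow> nat \<Rightarrow> (nat \<Rightarrow> pt) \<Rightarrow> nat \<Rightarrow> (nat \<Rightarrow> pt)" where
  "bsum n m f k = (\<lambda>i. if 1 \<le> i \<and> i \<le> n then f i
                       else if n < i \<and> i \<le> n + k then V (i - n + m) else Bot)"

text \<open>The \<B>-map [N] \<rightarrow> [N-1] corresponding to the face I^(N-1) \<rightarrow> I^N inserting the
  endpoint d (Bot = 0, Top = 1) in coordinate i.\<close>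
definition faceB :: "nat \<Rightarrow> nat \<Rightarrow> pt \<Rightarrow> (nat \<Rightarrow> pt)" where
  "faceB N i d = (\<lambda>j. if 1 \<le> j \<and> j < i then V j
                      else if j = i then d
                      else if i < j \<and> j \<le> N then V (j - 1) else Bot)"

definition endp :: "bool \<Rightarrow> pt" where
  "endp d = (if d then Top else Bot)"

section \<open>Cartesian cubical sets (covariant functors on \<B> = presheaves on \<B>^op)\<close>

record 'a cset =
  cells :: "nat \<Rightarrow> 'a set"
  act :: "nat \<Rightarrow> nat \<Rightarrow> (nat \<Rightarrow> pt) \<Rightarrow> 'a \<Rightarrow> 'a"

definition cubical_set :: "'a cset \<Rightarrow> bool" where
  "cubical_set X \<longleftrightarrow>
     (\<forall>n x. x \<in> cells X n \<longrightarrow> act X n n (idB n) x = x) \<and>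
     (\<forall>n m f x. f \<in> Bmaps n m \<longrightarrow> x \<in> cells X n \<longrightarrow> act X n m f x \<in> cells X m) \<and>
     (\<forall>n m p f g x. f \<in> Bmaps n m \<longrightarrow> g \<in> Bmaps m p \<longrightarrow> x \<in> cells X n \<longrightarrow>
        act X n p (bcomp g f) x = act X m p g (act X n m f x))"

text \<open>A subobject S of the representable I^N is given levelwise by S m \<subseteq> Bmaps N m.
  A map S \<rightarrow> A is a natural family (extensional: undefined outside S).\<close>
definition pmap :: "'a cset \<Rightarrow> nat \<Rightarrow> (nat \<Rightarrow> (nat \<Rightarrow> pt) set)
                     \<Rightarrow> (nat \<Rightarrow> (nat \<Rightarrow> pt) \<Rightarrow> 'a) \<Rightarrow> bool" where
  "pmap A N S b \<longleftrightarrow>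
     (\<forall>m f. f \<in> S m \<longrightarrow> b m f \<in> cells A m) \<and>
     (\<forall>m m' f g. f \<in> S m \<longrightarrow> g \<in> Bmaps m m' \<longrightarrow> b m' (bcomp g f) = act A m m' g (b m f)) \<and>
     (\<forall>m f. f \<notin> S m \<longrightarrow> b m f = undefined)"

definition fullS :: "nat \<Rightarrow> nat \<Rightarrow> (nat \<Rightarrow> pt) set" where
  "fullS N m = Bmaps N m"

text \<open>I^k \<times> (open box \<sqcup>^n_e) \<subseteq> I^k \<times> I^n = I^(k+n): union of the images of
  1 \<times> \<alpha>_i^d for (i,d) \<noteq> (1,e), i.e. of those f with f(x_(k+i)) = d.\<close>
definition boxS :: "nat \<Rightarrow> nat \<Rightarrow> bool \<Rightarrow> nat \<Rightarrow> (nat \<Rightarrow> pt) set" where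
  "boxS k n e m = {f \<in> Bmaps (k + n) m.
      \<exists>i\<in>{1..n}. \<exists>d. (i, d) \<noteq> (1, e) \<and> f (k + i) = endp d}"

text \<open>Precomposition of b (a map out of a subobject of I^(k+n)) with the map
  I^(j+n) \<rightarrow> I^(k+n) induced by the \<B>-map h : [k+n] \<rightarrow> [j+n], restricted to S.\<close>
definition prec :: "(nat \<Rightarrow> (nat \<Rightarrow> pt) set) \<Rightarrow> (nat \<Rightarrow> pt)
                     \<Rightarrow> (nat \<Rightarrow> (nat \<Rightarrow> pt) \<Rightarrow> 'a) \<Rightarrow> (nat \<Rightarrow> (nat \<Rightarrow> pt) \<Rightarrow> 'a)" where
  "prec S h b = (\<lambda>m f. if f \<in> S m then b m (bcomp f h) else undefined)"

text \<open>phi n e k b : the chosen filler of b : I^k \<times> \<sqcup>^n_e \<rightarrow> A.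
  A map \<alpha> : I^j \<rightarrow> I^k is a \<B>-map a : [k] \<rightarrow> [j], and \<alpha> \<times> 1 corresponds to a \<oplus> id_n.\<close>
definition uniform_kan :: "'a cset \<Rightarrow> (nat \<Rightarrow> bool \<Rightarrow> nat \<Rightarrow> (nat \<Rightarrow> (nat \<Rightarrow> pt) \<Rightarrow> 'a)
                              \<Rightarrow> (nat \<Rightarrow> (nat \<Rightarrow> pt) \<Rightarrow> 'a)) \<Rightarrow> bool" where
  "uniform_kan A phi \<longleftrightarrow>
     (\<forall>n e k b. 1 \<le> n \<longrightarrow> 1 \<le> k \<longrightarrow> pmap A (k + n) (boxS k n e) b \<longrightarrow>
        pmap A (k + n) (fullS (k + n)) (phi n e k b) \<and>
        (\<forall>m f. f \<in> boxS k n e m \<longrightarrow> phi n e k b m f = b m f) \<and>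
        (\<forall>j a. 1 \<le> j \<longrightarrow> a \<in> Bmaps k j \<longrightarrow>
           phi n e j (prec (boxS j n e) (bsum k j a n) b)
             = prec (fullS (j + n)) (bsum k j a n) (phi n e k b)))"

text \<open>n-cubes of X^I are (n+1)-cubes of X (last coordinate = path coordinate t),
  n-cubes of X^(I\<times>I) are (n+2)-cubes of X (coordinates (u,s,t), s = n+1, t = n+2);
  the action of f is that of f \<oplus> id.  c n maps n-cubes of X^I to n-cubes of X^(I\<times>I).\<close>
definition is_connection :: "'a cset \<Rightarrow> (nat \<Rightarrow> 'a \<Rightarrow> 'a) \<Rightarrow> bool" where
  "is_connection X c \<longleftrightarrow>
     (\<forall>n a. a \<in> cells X (n + 1) \<longrightarrow> c n a \<in> cells X (n + 2)) \<and>
     (\<forall>n m f a. f \<in> Bmaps n m \<longrightarrow> a \<in> cells X (n + 1) \<longrightarrow>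
        c m (act X (n + 1) (m + 1) (bsum n m f 1) a)
          = act X (n + 2) (m + 2) (bsum n m f 2) (c n a)) \<and>
     (\<forall>n a. a \<in> cells X (n + 1) \<longrightarrow>
        (let a0 = act X (n + 1) n (faceB (n + 1) (n + 1) Bot) a;
             const = act X n (n + 1) (idB n) a0
         in act X (n + 2) (n + 1) (faceB (n + 2) (n + 1) Top) (c n a) = a \<and>
            act X (n + 2) (n + 1) (faceB (n + 2) (n + 1) Bot) (c n a) = const \<and>
            act X (n + 2) (n + 1) (faceB (n + 2) (n + 2) Bot) (c n a) = const))"

end

theory Submission
  imports Defs
begin

lemma pts_cases:
  assumes "x \<in> pts m"
  shows "x = Bot \<or> x = Top \<or> (\<exists>j. 1 \<le> j \<and> j \<le> m \<and> x = V j)"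
  using assms unfolding pts_def by auto

lemma ext_pts: "x \<in> pts m \<Longrightarrow> g \<in> Bmaps m p \<Longrightarrow> ext g x \<in> pts p"
  unfolding Bmaps_def by (auto dest!: pts_cases simp: pts_def)

lemma bcomp_Bmaps: "f \<in> Bmaps n m \<Longrightarrow> g \<in> Bmaps m p \<Longrightarrow> bcomp g f \<in> Bmaps n p"
  unfolding bcomp_def
  apply (subst Bmaps_def)
  using ext_pts by (auto simp: Bmaps_def)

lemma bcomp_idB: "f \<in> Bmaps n m \<Longrightarrow> bcomp f (idB n) = f"
  unfolding bcomp_def idB_def Bmaps_def by (auto simp: fun_eq_iff)

definition Gof :: "nat \<Rightarrow> (nat \<Rightarrow> pt) \<Rightarrow> (nat \<Rightarrow> pt)" where
  "Gof n g = (\<lambda>i. if 1 \<le> i \<and> i \<le> n then g i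
      else if i = n + 1 then (if g (n + 3) = Top then g (n + 2) else Bot) else Bot)"

definition bb :: "'a cset \<Rightarrow> nat \<Rightarrow> 'a \<Rightarrow> nat \<Rightarrow> (nat \<Rightarrow> pt) \<Rightarrow> 'a" where
  "bb A n a = (\<lambda>M g. if g \<in> boxS (n + 1) 2 True M then act A (n + 1) M (Gof n g) a else undefined)"

definition hh :: "nat \<Rightarrow> nat \<Rightarrow> pt" where
  "hh n = (\<lambda>i. if 1 \<le> i \<and> i \<le> n then V i else if i = n + 2 then V (n + 2)
      else if i = n + 3 then V (n + 1) else Bot)"

lemma boxS_iff: "g \<in> boxS (n + 1) 2 True M \<longleftrightarrow> g \<in> Bmaps (n + 3) M \<and>
    (g (n + 2) = Bot \<or> g (n + 3) = Bot \<or> g (n + 3) = Top)"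
proof -
  have "(\<exists>i\<in>{1..2::nat}. \<exists>d. (i, d) \<noteq> (1, True) \<and> g (n + 1 + i) = endp d) \<longleftrightarrow>
     (g (n + 2) = Bot \<or> g (n + 3) = Bot \<or> g (n + 3) = Top)"
  proof
    assume "\<exists>i\<in>{1..2::nat}. \<exists>d. (i, d) \<noteq> (1, True) \<and> g (n + 1 + i) = endp d"
    then obtain i d where "i \<in> {1..2::nat}" "(i, d) \<noteq> (1, True)" "g (n + 1 + i) = endp d" by blast
    moreover have "i = 1 \<or> i = 2" using \<open>i \<in> {1..2}\<close> by auto
    ultimately show "g (n + 2) = Bot \<or> g (n + 3) = Bot \<or> g (n + 3) = Top"
      by (cases d; elim disjE; simp add: endp_def numeral_3_eq_3)
  next
    assume "g (n + 2) = Bot \<or> g (n + 3) = Bot \<or> g (n + 3) = Top"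
    then show "\<exists>i\<in>{1..2::nat}. \<exists>d. (i, d) \<noteq> (1, True) \<and> g (n + 1 + i) = endp d"
    proof (elim disjE)
      assume "g (n + 2) = Bot" then show ?thesis
        by (intro bexI[of _ 1] exI[of _ False]) (auto simp: endp_def)
    next
      assume "g (n + 3) = Bot" then show ?thesis
        by (intro bexI[of _ 2] exI[of _ False]) (auto simp: endp_def numeral_3_eq_3)
    next
      assume "g (n + 3) = Top" then show ?thesis
        by (intro bexI[of _ 2] exI[of _ True]) (auto simp: endp_def numeral_3_eq_3)
    qed
  qed
  then show ?thesis unfolding boxS_def by (simp add: numeral_3_eq_3)
qed

lemma Bmaps_val: "g \<in> Bmaps n m \<Longrightarrow> 1 \<le> i \<Longrightarrow> i \<le> n \<Longrightarrow> g i \<in> pts m"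
  unfolding Bmaps_def by auto

lemma Bmaps_out: "g \<in> Bmaps n m \<Longrightarrow> \<not> (1 \<le> i \<and> i \<le> n) \<Longrightarrow> g i = Bot"
  unfolding Bmaps_def by auto

lemma Gof_Bmaps: assumes g: "g \<in> Bmaps (n + 3) M" shows "Gof n g \<in> Bmaps (n + 1) M"
proof -
  have "g (n + 2) \<in> pts M" by (rule Bmaps_val[OF g]) auto
  moreover have "\<And>i. 1 \<le> i \<Longrightarrow> i \<le> n \<Longrightarrow> g i \<in> pts M" by (rule Bmaps_val[OF g]) auto
  moreover have "Bot \<in> pts M" by (simp add: pts_def)
  ultimately show ?thesis unfolding Gof_def Bmaps_def by auto
qed

lemma box_bcomp: "f \<in> boxS (n + 1) 2 True M \<Longrightarrow> g \<in> Bmaps M M' \<Longrightarrow>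
    bcomp g f \<in> boxS (n + 1) 2 True M'"
  unfolding boxS_iff using bcomp_Bmaps by (auto simp: bcomp_def)

lemma Gof_bcomp: "f \<in> boxS (n + 1) 2 True M \<Longrightarrow> g \<in> Bmaps M M' \<Longrightarrow>
    Gof n (bcomp g f) = bcomp g (Gof n f)"
  unfolding boxS_iff by (auto simp: bcomp_def Gof_def fun_eq_iff)

lemma bb_pmap:
  assumes A: "cubical_set A" and a: "a \<in> cells A (n + 1)"
  shows "pmap A (n + 1 + 2) (boxS (n + 1) 2 True) (bb A n a)"
  unfolding pmap_def
proof (intro conjI allI impI)
  fix m f assume f: "f \<in> boxS (n + 1) 2 True m"
  then have "Gof n f \<in> Bmaps (n + 1) m" using Gof_Bmaps boxS_iff by blast
  then show "bb A n a m f \<in> cells A m" using A a f unfolding bb_def cubical_set_def by auto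
next
  fix m m' f g assume f: "f \<in> boxS (n + 1) 2 True m" and g: "g \<in> Bmaps m m'"
  have G: "Gof n f \<in> Bmaps (n + 1) m" using f Gof_Bmaps boxS_iff by blast
  have "bb A n a m' (bcomp g f) = act A (n + 1) m' (bcomp g (Gof n f)) a"
    using box_bcomp[OF f g] Gof_bcomp[OF f g] unfolding bb_def by simp
  also have "\<dots> = act A m m' g (act A (n + 1) m (Gof n f) a)"
    using A G g a unfolding cubical_set_def by blast
  finally show "bb A n a m' (bcomp g f) = act A m m' g (bb A n a m f)"
    using f unfolding bb_def by simp
next
  fix m f assume "f \<notin> boxS (n + 1) 2 True m"
  then show "bb A n a m f = undefined" unfolding bb_def by simp
qed

lemma pts_mono: "x \<in> pts m \<Longrightarrow> m \<le> m' \<Longrightarrow> x \<in> pts m'"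
  unfolding pts_def by auto

lemma bsum_Bmaps: assumes f: "f \<in> Bmaps n m" shows "bsum n m f k \<in> Bmaps (n + k) (m + k)"
  using f unfolding bsum_def Bmaps_def by (auto simp: pts_def image_iff intro: pts_mono)

lemma hh_Bmaps: "hh n \<in> Bmaps (n + 1 + 2) (n + 2)"
  unfolding hh_def Bmaps_def by (auto simp: pts_def)


lemma ext_pts_id: "x \<in> pts m \<Longrightarrow> (\<And>j. 1 \<le> j \<Longrightarrow> j \<le> m \<Longrightarrow> g j = V j) \<Longrightarrow> ext g x = x"
  by (auto dest!: pts_cases)

lemma nat_eq1:
  assumes f: "f \<in> Bmaps n m"
  shows "bcomp (hh m) (bsum (n + 1) (m + 1) (bsum n m f 1) 2) = bcomp (bsum n m f 2) (hh n)"
proof (rule ext)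
  fix i
  show "bcomp (hh m) (bsum (n + 1) (m + 1) (bsum n m f 1) 2) i = bcomp (bsum n m f 2) (hh n) i"
  proof (cases "1 \<le> i \<and> i \<le> n")
    case True
    have "f i \<in> pts m" using Bmaps_val[OF f] True by auto
    then have "ext (hh m) (f i) = f i" by (rule ext_pts_id) (simp add: hh_def)
    then show ?thesis using True by (simp add: bcomp_def bsum_def hh_def)
  next
    case False
    then show ?thesis by (auto simp: bcomp_def bsum_def hh_def numeral_3_eq_3)
  qed
qed

lemma nat_eq2:
  assumes f: "f \<in> Bmaps n m"
  shows "bcomp (Gof m g) (bsum n m f 1) = Gof n (bcomp g (bsum (n + 1) (m + 1) (bsum n m f 1) 2))"
proof (rule ext)
  fix i
  show "bcomp (Gof m g) (bsum n m f 1) i = Gof n (bcomp g (bsum (n + 1) (m + 1) (bsum n m f 1) 2)) i"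
  proof (cases "1 \<le> i \<and> i \<le> n")
    case True
    have "f i \<in> pts m" using Bmaps_val[OF f] True by auto
    then have "ext (Gof m g) (f i) = ext g (f i)" by (auto dest!: pts_cases simp: Gof_def)
    then show ?thesis using True by (simp add: bcomp_def bsum_def Gof_def)
  next
    case False
    then show ?thesis by (auto simp: bcomp_def bsum_def Gof_def numeral_3_eq_3)
  qed
qed

lemma face1: "Gof n (bcomp (faceB (n + 2) (n + 1) Top) (hh n)) = idB (n + 1)"
  by (auto simp: fun_eq_iff bcomp_def faceB_def hh_def Gof_def idB_def numeral_3_eq_3)

lemma face0: "Gof n (bcomp (faceB (n + 2) (n + 1) Bot) (hh n)) = bcomp (idB n) (faceB (n + 1) (n + 1) Bot)"
  by (auto simp: fun_eq_iff bcomp_def faceB_def hh_def Gof_def idB_def numeral_3_eq_3)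

lemma facet: "Gof n (bcomp (faceB (n + 2) (n + 2) Bot) (hh n)) = bcomp (idB n) (faceB (n + 1) (n + 1) Bot)"
  by (auto simp: fun_eq_iff bcomp_def faceB_def hh_def Gof_def idB_def numeral_3_eq_3)

lemma box1: "d \<in> {Bot, Top} \<Longrightarrow> bcomp (faceB (n + 2) (n + 1) d) (hh n) \<in> boxS (n + 1) 2 True (n + 1)"
  unfolding boxS_iff by (auto simp: Bmaps_def pts_def bcomp_def faceB_def hh_def numeral_3_eq_3)

lemma box2: "bcomp (faceB (n + 2) (n + 2) Bot) (hh n) \<in> boxS (n + 1) 2 True (n + 1)"
  unfolding boxS_iff by (auto simp: Bmaps_def pts_def bcomp_def faceB_def hh_def numeral_3_eq_3)

lemma faceB_Bm: "d \<in> {Bot, Top} \<Longrightarrow> 1 \<le> i \<Longrightarrow> i \<le> N \<Longrightarrow> faceB N i d \<in> Bmaps N (N - 1)"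
  unfolding Bmaps_def faceB_def by (auto simp: pts_def image_iff)

lemma idB_Bm: "idB n \<in> Bmaps n (n + 1)"
  unfolding Bmaps_def idB_def by (auto simp: pts_def)

lemma pmap_full_nat:
  assumes "pmap A N (fullS N) P" "f \<in> Bmaps N m" "g \<in> Bmaps m m'"
  shows "P m' (bcomp g f) = act A m m' g (P m f)"
  using assms unfolding pmap_def fullS_def by blast

theorem lemma3p8:
  fixes A :: "'a cset"
    and phi :: "nat \<Rightarrow> bool \<Rightarrow> nat \<Rightarrow> (nat \<Rightarrow> (nat \<Rightarrow> pt) \<Rightarrow> 'a) \<Rightarrow> (nat \<Rightarrow> (nat \<Rightarrow> pt) \<Rightarrow> 'a)"
  assumes "cubical_set A"
    and "uniform_kan A phi"
  shows "\<exists>c. is_connection A c"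
proof -
  note A = assms(1)
  define Phi where "Phi n a = phi 2 True (n + 1) (bb A n a)" for n a
  define c where "c n a = Phi n a (n + 2) (hh n)" for n a
  have K: "pmap A (n + 1 + 2) (fullS (n + 1 + 2)) (Phi n a) \<and>
        (\<forall>m f. f \<in> boxS (n + 1) 2 True m \<longrightarrow> Phi n a m f = bb A n a m f) \<and>
        (\<forall>j a'. 1 \<le> j \<longrightarrow> a' \<in> Bmaps (n + 1) j \<longrightarrow>
           phi 2 True j (prec (boxS j 2 True) (bsum (n + 1) j a' 2) (bb A n a))
             = prec (fullS (j + 2)) (bsum (n + 1) j a' 2) (Phi n a))"
    if a: "a \<in> cells A (n + 1)" for n a
    using assms(2) bb_pmap[OF A a] unfolding uniform_kan_def Phi_def
    by (metis le_add2 one_le_numeral)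
  have cells: "c n a \<in> cells A (n + 2)" if a: "a \<in> cells A (n + 1)" for n a
    using K[OF a] hh_Bmaps[of n] unfolding c_def pmap_def fullS_def by blast
  have natur: "c m (act A (n + 1) (m + 1) (bsum n m f 1) a)
          = act A (n + 2) (m + 2) (bsum n m f 2) (c n a)"
    if f: "f \<in> Bmaps n m" and a: "a \<in> cells A (n + 1)" for n m f a
  proof -
    define F where "F = bsum n m f 1"
    define H where "H = bsum (n + 1) (m + 1) F 2"
    define a' where "a' = act A (n + 1) (m + 1) F a"
    have F: "F \<in> Bmaps (n + 1) (m + 1)" unfolding F_def by (rule bsum_Bmaps[OF f])
    have H: "H \<in> Bmaps (n + 1 + 2) (m + 1 + 2)" unfolding H_def by (rule bsum_Bmaps[OF F])
    have a': "a' \<in> cells A (m + 1)" using A F a unfolding a'_def cubical_set_def by blast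
    have bbeq: "bb A m a' = prec (boxS (m + 1) 2 True) H (bb A n a)"
    proof (intro ext)
      fix M g
      show "bb A m a' M g = prec (boxS (m + 1) 2 True) H (bb A n a) M g"
      proof (cases "g \<in> boxS (m + 1) 2 True M")
        case True
        have gB: "g \<in> Bmaps (m + 3) M" using True boxS_iff by blast
        have gH: "bcomp g H \<in> boxS (n + 1) 2 True M"
        proof -
          have "bcomp g H \<in> Bmaps (n + 3) M" using bcomp_Bmaps[OF H] gB
            by (simp add: numeral_3_eq_3)
          moreover have "bcomp g H (n + 2) = g (m + 2)" "bcomp g H (n + 3) = g (m + 3)"
            unfolding H_def bcomp_def bsum_def by (auto simp: numeral_3_eq_3)
          ultimately show ?thesis using True unfolding boxS_iff by simp
        qed
        have "bb A m a' M g = act A (m + 1) M (Gof m g) a'" using True unfolding bb_def by simp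
        also have "\<dots> = act A (n + 1) M (bcomp (Gof m g) F) a"
          unfolding a'_def using A F a Gof_Bmaps[OF gB] unfolding cubical_set_def by metis
        also have "\<dots> = act A (n + 1) M (Gof n (bcomp g H)) a"
          unfolding F_def H_def using nat_eq2[OF f] by simp
        also have "\<dots> = prec (boxS (m + 1) 2 True) H (bb A n a) M g"
          using True gH unfolding prec_def bb_def by simp
        finally show ?thesis .
      next
        case False
        then show ?thesis unfolding bb_def prec_def by simp
      qed
    qed
    have "c m a' = Phi m a' (m + 2) (hh m)" unfolding c_def by simp
    also have "Phi m a' = prec (fullS (m + 1 + 2)) H (Phi n a)"
      unfolding Phi_def[of m] bbeq H_def using K[OF a] F
      by (metis Phi_def le_add2)
    also have "prec (fullS (m + 1 + 2)) H (Phi n a) (m + 2) (hh m) = Phi n a (m + 2) (bcomp (hh m) H)"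
      using hh_Bmaps[of m] unfolding prec_def fullS_def by simp
    also have "bcomp (hh m) H = bcomp (bsum n m f 2) (hh n)"
      unfolding H_def F_def by (rule nat_eq1[OF f])
    also have "Phi n a (m + 2) (bcomp (bsum n m f 2) (hh n)) = act A (n + 2) (m + 2) (bsum n m f 2) (c n a)"
      unfolding c_def using pmap_full_nat[OF conjunct1[OF K[OF a]] hh_Bmaps bsum_Bmaps[OF f]] by simp
    finally show ?thesis unfolding a'_def F_def .
  qed
  have bnd: "act A (n + 2) (n + 1) (faceB (n + 2) (n + 1) Top) (c n a) = a \<and>
            act A (n + 2) (n + 1) (faceB (n + 2) (n + 1) Bot) (c n a) = cst \<and>
            act A (n + 2) (n + 1) (faceB (n + 2) (n + 2) Bot) (c n a) = cst"
    if a: "a \<in> cells A (n + 1)"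
      and cst: "cst = act A n (n + 1) (idB n) (act A (n + 1) n (faceB (n + 1) (n + 1) Bot) a)" for n a cst
  proof -
    have P: "pmap A (n + 1 + 2) (fullS (n + 1 + 2)) (Phi n a)" using K[OF a] by blast
    have box: "\<And>f. f \<in> boxS (n + 1) 2 True (n + 1) \<Longrightarrow> Phi n a (n + 1) f = act A (n + 1) (n + 1) (Gof n f) a"
      using K[OF a] unfolding bb_def by simp
    have fc: "act A (n + 2) (n + 1) e (c n a) = Phi n a (n + 1) (bcomp e (hh n))"
      if e: "e \<in> Bmaps (n + 2) (n + 1)" for e
      unfolding c_def using pmap_full_nat[OF P hh_Bmaps e] by simp
    have fB1: "faceB (n + 2) i d \<in> Bmaps (n + 2) (n + 1)" if "d \<in> {Bot, Top}" "1 \<le> i" "i \<le> n + 2" for i d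
      using faceB_Bm[OF that] by simp
    have cst2: "cst = act A (n + 1) (n + 1) (bcomp (idB n) (faceB (n + 1) (n + 1) Bot)) a"
      unfolding cst using A a faceB_Bm[of Bot "n + 1" "n + 1"] idB_Bm[of n] unfolding cubical_set_def
      by (metis add_diff_cancel_right' insertCI le_add2 order_refl)
    have id: "act A (n + 1) (n + 1) (idB (n + 1)) a = a" using A a unfolding cubical_set_def by blast
    show ?thesis
      using fc[OF fB1] box[OF box1] box[OF box2] face1 face0 facet cst2 id
      by simp
  qed
  have "is_connection A c"
    unfolding is_connection_def Let_def
    using cells natur bnd by blast
  then show ?thesis by blast
qed

end
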